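(* Let $0\le\alpha<\alpha_{space}:=\min(v_0/4,\gamma/(2V^0))$, let $u_0\in C_\alpha$ and let $(s,u)$ be the solution of the free-interface problem with initial data $u_0$. Then for all $t>0$, $$|T_1(t)u_0|_\alpha\le V^0/\sqrt\gamma .$$
   Context: Fix $\gamma>0$, $0<v_0\le V^0$. The kinetics $g:[0,\infty)\to\mathbb{R}$ is monotonically decreasing, differentiable, $|g'|\le C$, $-V^0\le g\le -v_0$. Free-interface problem: find $s(t)$, $s(0)=0$, and $u(x,t)$ with $u_t=u_{xx}-\gamma u$ for $x\ne s(t)$, $t>0$; $u(x,0)=u_0(x)$; $g(u(s(t),t))=v(t)$; $u_x^+(s(t),t)-u_x^-(s(t),t)=v(t)$, with $v=s'$, $u_x^\pm$ one-sided derivatives, $u\to0$ at $\pm\infty$; the classical solution exists and is unique, and $-V^0\le v(t)\le -v_0$. With $G(x,t,\xi,\tau)=[4\pi(t-\tau)]^{-1/2}\exp\{-(x-\xi)^2/(4(t-\tau))\}$, define $(T_1(t)u_0)(x)=-\int_0^t e^{-\gamma(t-\tau)}G(x,t,s(\tau),\tau)v(\tau)d\tau$ (the free-interface contribution to $u$). Weighted norms: $|f|_\alpha=\sup_x e^{\alpha|x|}|f(x)|$, $C_\alpha=\{f\in C(\mathbb{R}):|f|_\alpha<\infty\}$; for a function $f(\cdot,t)$ associated with the solution at time $t$, $|f(\cdot,t)|_\alpha:=\sup_x e^{\alpha|x-s(t)|}|f(x,t)|$. *)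

theory Defs
  imports "HOL-Analysis.Analysis"
begin

definition heat_kernel :: "real \<Rightarrow> real \<Rightarrow> real \<Rightarrow> real \<Rightarrow> real" where
  "heat_kernel x t \<xi> \<tau> = exp (- ((x - \<xi>)^2) / (4 * (t - \<tau>))) / sqrt (4 * pi * (t - \<tau>))"

definition C_alpha :: "real \<Rightarrow> (real \<Rightarrow> real) set" where
  "C_alpha \<alpha> = {f. continuous_on UNIV f \<and> bdd_above (range (\<lambda>x. exp (\<alpha> * \<bar>x\<bar>) * \<bar>f x\<bar>))}"

definition admissible_kinetics :: "real \<Rightarrow> real \<Rightarrow> real \<Rightarrow> (real \<Rightarrow> real) \<Rightarrow> bool" where
  "admissible_kinetics v0 V0 C g \<longleftrightarrow>
     antimono_on {0..} g \<and>
     (\<exists>g'. \<forall>y\<ge>0. (g has_real_derivative g' y) (at y within {0..}) \<and> \<bar>g' y\<bar> \<le> C) \<and>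
     (\<forall>y\<ge>0. - V0 \<le> g y \<and> g y \<le> - v0)"

definition free_interface_solution ::
  "real \<Rightarrow> (real \<Rightarrow> real) \<Rightarrow> (real \<Rightarrow> real) \<Rightarrow> (real \<Rightarrow> real) \<Rightarrow> (real \<Rightarrow> real)
     \<Rightarrow> (real \<Rightarrow> real \<Rightarrow> real) \<Rightarrow> bool" where
  "free_interface_solution \<gamma> g u0 s v u \<longleftrightarrow>
     s 0 = 0 \<and> continuous_on {0..} s \<and>
     (\<forall>t>0. (s has_real_derivative v t) (at t)) \<and>
     continuous_on (UNIV \<times> {0..}) (\<lambda>(x, t). u x t) \<and>
     (\<forall>x. u x 0 = u0 x) \<and>
     (\<forall>t>0. \<forall>x. x \<noteq> s t \<longrightarrow>
        (\<exists>ut ux uxx.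
           ((\<lambda>\<tau>. u x \<tau>) has_real_derivative ut) (at t) \<and>
           (\<forall>\<^sub>F y in at x. ((\<lambda>z. u z t) has_real_derivative ux y) (at y)) \<and>
           (ux has_real_derivative uxx) (at x) \<and>
           ut = uxx - \<gamma> * u x t)) \<and>
     (\<forall>t>0. u (s t) t \<ge> 0 \<and> g (u (s t) t) = v t) \<and>
     (\<forall>t>0. \<exists>uxp uxm.
        ((\<lambda>z. u z t) has_real_derivative uxp) (at_right (s t)) \<and>
        ((\<lambda>z. u z t) has_real_derivative uxm) (at_left (s t)) \<and>
        uxp - uxm = v t) \<and>
     (\<forall>t>0. ((\<lambda>x. u x t) \<longlongrightarrow> 0) at_top \<and> ((\<lambda>x. u x t) \<longlongrightarrow> 0) at_bot)"

text \<open>Free-interface contribution (T_1(t) u0)(x).\<close>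
definition T1 :: "real \<Rightarrow> (real \<Rightarrow> real) \<Rightarrow> (real \<Rightarrow> real) \<Rightarrow> real \<Rightarrow> real \<Rightarrow> real" where
  "T1 \<gamma> s v t x = - integral {0..t} (\<lambda>\<tau>. exp (- \<gamma> * (t - \<tau>)) * heat_kernel x t (s \<tau>) \<tau> * v \<tau>)"

end

theory Submission imports Defs begin

lemma gam_part:
  fixes c b :: real assumes "c > 0" "b \<ge> 0"
  shows "(\<lambda>u. u powr (-1/2) / exp u) integrable_on {0..b} \<and>
         0 \<le> integral {0..b} (\<lambda>u. u powr (-1/2) / exp u) \<and>
         integral {0..b} (\<lambda>u. u powr (-1/2) / exp u) \<le> sqrt pi"
proof -
  let ?F = "\<lambda>u::real. u powr (-1/2) / exp u"
  have G: "(?F has_integral sqrt pi) {0..}"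
    using Gamma_integral_real[of "1/2"] by (simp add: Gamma_one_half_real)
  have I: "?F integrable_on {0..b}"
    by (rule integrable_on_subinterval[of _ "{0..}"]) (use G in auto)
  have "integral {0..b} ?F \<le> integral {0..} ?F"
    by (rule integral_subset_le) (use G I in auto)
  moreover have "0 \<le> integral {0..b} ?F"
    by (rule integral_nonneg[OF I]) auto
  ultimately show ?thesis using I G by (simp add: integral_unique)
qed

lemma h_int:
  fixes c t :: real assumes "c > 0" "t \<ge> 0"
  shows "\<exists>J. ((\<lambda>\<tau>. exp (- c * (t - \<tau>)) / sqrt (4 * pi * (t - \<tau>))) has_integral J) {0..t}
          \<and> J \<le> 1 / (2 * sqrt c)"
proof -
  let ?F = "\<lambda>u::real. u powr (-1/2) / exp u"
  define I where "I = integral {0..c*t} ?F"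
  from gam_part[of c "c*t"] assms have FI: "?F integrable_on {0..c*t}" and I0: "0 \<le> I" and I1: "I \<le> sqrt pi"
    unfolding I_def by auto
  have "(?F has_integral I) (cbox 0 (c*t))" using integrable_integral[OF FI] unfolding I_def by (simp add: cbox_interval)
  from has_integral_affinity[OF this, of "-c" "c*t"] assms
  have A: "((\<lambda>x. ?F (-c * x + c*t)) has_integral (1/c) * I)
          ((\<lambda>x. (1 / -c) * x + - ((1 / -c) * (c*t))) ` cbox 0 (c*t))" by simp
  have img: "(\<lambda>x. (1 / -c) * x + - ((1 / -c) * (c*t))) ` cbox 0 (c*t) = {0..t}"
  proof (rule set_eqI, rule iffI)
    fix y assume "y \<in> (\<lambda>x. (1 / -c) * x + - ((1 / -c) * (c*t))) ` cbox 0 (c*t)"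
    then obtain x where "x \<in> {0..c*t}" "y = (1 / -c) * x + - ((1 / -c) * (c*t))" by auto
    then have e: "c * y = c * t - x" using assms by (simp add: field_simps)
    have "0 \<le> c * y" "c * y \<le> c * t" using e \<open>x \<in> {0..c*t}\<close> by auto
    then show "y \<in> {0..t}" using assms
      by (auto simp: zero_le_mult_iff mult_le_cancel_left)
  next
    fix y assume y: "y \<in> {0..t}"
    have "c*(t-y) \<in> cbox 0 (c*t)" using y assms by (auto simp: algebra_simps)
    moreover have "y = (1 / -c) * (c*(t-y)) + - ((1 / -c) * (c*t))" using assms by (simp add: field_simps)
    ultimately show "y \<in> (\<lambda>x. (1 / -c) * x + - ((1 / -c) * (c*t))) ` cbox 0 (c*t)" by blast
  qed
  have A2: "((\<lambda>x. sqrt c / sqrt (4*pi) * ?F (-c * x + c*t)) has_integral sqrt c / sqrt (4*pi) * ((1/c) * I)) {0..t}"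
    by (rule has_integral_mult_right[OF A[unfolded img]])
  have eq: "sqrt c / sqrt (4*pi) * ?F (-c * x + c*t) = exp (- c * (t - x)) / sqrt (4 * pi * (t - x))"
    if "x \<in> {0..t}" for x
  proof (cases "x = t")
    case True then show ?thesis by simp
  next
    case False
    then have p: "t - x > 0" using that by auto
    have sc: "sqrt c > 0" using assms by simp
    have ss: "sqrt (t - x) > 0" using p by simp
    have e1: "-c * x + c*t = c * (t - x)" by (simp add: algebra_simps)
    have "(c * (t - x)) powr (-1/2) = inverse ((c * (t - x)) powr (1/2))"
      by (simp add: powr_minus)
    also have "\<dots> = inverse (sqrt (c * (t - x)))" using p assms by (simp add: powr_half_sqrt)
    finally have e2: "(c * (t - x)) powr (-1/2) = inverse (sqrt c * sqrt (t - x))"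
      by (simp add: real_sqrt_mult)
    have e3: "exp (- c * (t - x)) = inverse (exp (c * (t - x)))" by (simp add: exp_minus)
    have e4: "sqrt (4 * pi * (t - x)) = sqrt (4*pi) * sqrt (t - x)" by (simp add: real_sqrt_mult)
    show ?thesis unfolding e1 e2 e3 e4 using sc ss
      by (simp add: divide_inverse)
  qed
  have A3: "((\<lambda>\<tau>. exp (- c * (t - \<tau>)) / sqrt (4 * pi * (t - \<tau>))) has_integral sqrt c / sqrt (4*pi) * ((1/c) * I)) {0..t}"
    by (rule has_integral_eq[OF _ A2]) (use eq in auto)
  have "sqrt c / sqrt (4*pi) * ((1/c) * I) \<le> sqrt c / sqrt (4*pi) * ((1/c) * sqrt pi)"
    using I1 assms by (intro mult_left_mono) auto
  also have "\<dots> = 1 / (2 * sqrt c)"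
    using assms by (simp add: real_sqrt_mult field_simps)
  finally show ?thesis using A3 by blast
qed


lemma key_pt:
  fixes \<alpha> \<gamma> V0 \<sigma> a b vv :: real
  assumes "\<sigma> > 0" "\<alpha> \<ge> 0" "\<bar>a\<bar> \<le> \<bar>b\<bar> + V0 * \<sigma>" "\<bar>vv\<bar> \<le> V0"
    and "\<alpha>^2 + \<alpha> * V0 \<le> 3 * \<gamma> / 4"
  shows "exp (\<alpha> * \<bar>a\<bar>) * \<bar>exp (- \<gamma> * \<sigma>) * (exp (- (b^2) / (4 * \<sigma>)) / sqrt (4 * pi * \<sigma>)) * vv\<bar>
         \<le> V0 * (exp (- (\<gamma>/4) * \<sigma>) / sqrt (4 * pi * \<sigma>))"
proof -
  have q: "\<alpha> * \<bar>b\<bar> - \<alpha>^2 * \<sigma> \<le> b^2 / (4 * \<sigma>)"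
  proof -
    have "0 \<le> (\<bar>b\<bar> - 2 * \<alpha> * \<sigma>)^2" by simp
    then have "(\<alpha> * \<bar>b\<bar> - \<alpha>^2 * \<sigma>) * (4 * \<sigma>) \<le> b^2"
      by (simp add: power2_eq_square algebra_simps)
    then show ?thesis using assms(1) by (simp add: pos_le_divide_eq)
  qed
  have am: "\<alpha> * \<bar>a\<bar> \<le> \<alpha> * \<bar>b\<bar> + \<alpha> * V0 * \<sigma>"
    using mult_left_mono[OF assms(3) assms(2)] by (simp add: algebra_simps)
  have "\<alpha>^2 * \<sigma> + \<alpha> * V0 * \<sigma> \<le> 3 * \<gamma> / 4 * \<sigma>"
    using mult_right_mono[OF assms(5), of \<sigma>] assms(1) by (simp add: algebra_simps)
  then have E: "\<alpha> * \<bar>a\<bar> + (- \<gamma> * \<sigma>) + (- (b^2) / (4 * \<sigma>)) \<le> - (\<gamma>/4) * \<sigma>"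
    using q am by (simp add: algebra_simps)
  have sp: "sqrt (4 * pi * \<sigma>) > 0" using assms(1) by simp
  have "exp (\<alpha> * \<bar>a\<bar>) * \<bar>exp (- \<gamma> * \<sigma>) * (exp (- (b^2) / (4 * \<sigma>)) / sqrt (4 * pi * \<sigma>)) * vv\<bar>
      = exp (\<alpha> * \<bar>a\<bar> + (- \<gamma> * \<sigma>) + (- (b^2) / (4 * \<sigma>))) / sqrt (4 * pi * \<sigma>) * \<bar>vv\<bar>"
  proof -
    have "exp (\<alpha> * \<bar>a\<bar> + (- \<gamma> * \<sigma>) + (- (b^2) / (4 * \<sigma>)))
        = exp (\<alpha> * \<bar>a\<bar>) * exp (- \<gamma> * \<sigma>) * exp (- (b^2) / (4 * \<sigma>))"
      by (simp only: exp_add)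
    then show ?thesis using sp by (simp add: abs_mult)
  qed
  also have "\<dots> \<le> exp (- (\<gamma>/4) * \<sigma>) / sqrt (4 * pi * \<sigma>) * V0"
    by (intro mult_mono divide_right_mono) (use E assms(4) sp in auto)
  finally show ?thesis by (simp add: mult.commute)
qed

lemma lip:
  fixes s v :: "real \<Rightarrow> real"
  assumes "continuous_on {0..} s" "\<forall>t>0. (s has_real_derivative v t) (at t)"
    "\<forall>t>0. \<bar>v t\<bar> \<le> V0" "0 < \<tau>" "\<tau> < t"
  shows "\<bar>s t - s \<tau>\<bar> \<le> V0 * (t - \<tau>)"
proof -
  have "continuous_on {\<tau>..t} s" using assms(1) continuous_on_subset assms(4) by fastforce
  moreover have "\<forall>x. \<tau> < x \<and> x < t \<longrightarrow> s differentiable (at x)"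
    using assms(2,4) real_differentiable_def by (metis less_trans)
  ultimately obtain l z where z: "\<tau> < z" "z < t" "DERIV s z :> l" "s t - s \<tau> = (t - \<tau>) * l"
    using MVT[OF assms(5)] by blast
  have "l = v z" using z assms(2,4) DERIV_unique by (metis less_trans)
  then have "\<bar>l\<bar> \<le> V0" using assms(3,4) z by force
  then show ?thesis using z(4) assms(5) by (simp add: abs_mult mult.commute mult_left_mono)
qed


theorem mainTheorem4:
  fixes \<gamma> v0 V0 C \<alpha> :: real
    and g u0 s v :: "real \<Rightarrow> real" and u :: "real \<Rightarrow> real \<Rightarrow> real"
  assumes "\<gamma> > 0" and "0 < v0" and "v0 \<le> V0"
    and "admissible_kinetics v0 V0 C g"
    and "0 \<le> \<alpha>" and "\<alpha> < min (v0 / 4) (\<gamma> / (2 * V0))"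
    and "u0 \<in> C_alpha \<alpha>"
    and "free_interface_solution \<gamma> g u0 s v u"
    and "\<forall>t>0. - V0 \<le> v t \<and> v t \<le> - v0"
  shows "\<forall>t>0. \<forall>x. exp (\<alpha> * \<bar>x - s t\<bar>) * \<bar>T1 \<gamma> s v t x\<bar> \<le> V0 / sqrt \<gamma>"
proof (intro allI impI)
  fix t x :: real
  assume t: "t > 0"
  have V0: "V0 > 0" using assms(2,3) by linarith
  have sc: "continuous_on {0..} s"
    using assms(8) unfolding free_interface_solution_def by blast
  have sd: "\<forall>t>0. (s has_real_derivative v t) (at t)"
    using assms(8) unfolding free_interface_solution_def by blast
  have vb: "\<forall>t>0. \<bar>v t\<bar> \<le> V0" using assms(9) assms(2) by fastforce
  have a1: "\<alpha> * (2 * V0) < \<gamma>" using assms(6) V0 by (simp add: pos_less_divide_eq)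
  have a2: "\<alpha> \<le> V0 / 4" using assms(6,3) by simp
  have "\<alpha>^2 \<le> \<alpha> * (V0 / 4)" using mult_left_mono[OF a2 assms(5)] by (simp add: power2_eq_square)
  then have ac: "\<alpha>^2 + \<alpha> * V0 \<le> 3 * \<gamma> / 4"
  proof -
    have "\<alpha> * V0 \<ge> 0" using assms(5) V0 by simp
    moreover have "\<alpha> * (V0 / 4) = (\<alpha> * V0) / 4" "\<alpha> * (2 * V0) = 2 * (\<alpha> * V0)" by simp_all
    ultimately show ?thesis using a1 \<open>\<alpha>^2 \<le> \<alpha> * (V0 / 4)\<close> by linarith
  qed
  define c where "c = \<gamma> / 4"
  have c0: "c > 0" using assms(1) c_def by simp
  define h where "h = (\<lambda>\<tau>. exp (- c * (t - \<tau>)) / sqrt (4 * pi * (t - \<tau>)))"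
  obtain J where hJ: "(h has_integral J) {0..t}" and J: "J \<le> 1 / (2 * sqrt c)"
  proof -
    from h_int[OF c0 less_imp_le[OF t]] obtain J0 where
      "((\<lambda>\<tau>. exp (- c * (t - \<tau>)) / sqrt (4 * pi * (t - \<tau>))) has_integral J0) {0..t}"
      "J0 \<le> 1 / (2 * sqrt c)" by (elim exE conjE)
    then show ?thesis using that unfolding h_def by blast
  qed
  have sq: "sqrt c = sqrt \<gamma> / 2" unfolding c_def by (simp add: real_sqrt_divide)
  have "V0 * J \<le> V0 * (1 / (2 * sqrt c))" by (rule mult_left_mono[OF J]) (use V0 in simp)
  also have "V0 * (1 / (2 * sqrt c)) = V0 / sqrt \<gamma>" unfolding sq by simp
  finally have J2: "V0 * J \<le> V0 / sqrt \<gamma>" .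
  define w where "w = exp (\<alpha> * \<bar>x - s t\<bar>)"
  define f where "f = (\<lambda>\<tau>. exp (- \<gamma> * (t - \<tau>)) * heat_kernel x t (s \<tau>) \<tau> * v \<tau>)"
  define f' where "f' = (\<lambda>\<tau>. if \<tau> = 0 then 0 else w * f \<tau>)"
  have "integral {0..t} f' = integral {0..t} (\<lambda>\<tau>. w * f \<tau>)"
    by (rule integral_spike[of "{0}"]) (auto simp: f'_def)
  also have "\<dots> = w * integral {0..t} f" by simp
  finally have If: "w * integral {0..t} f = integral {0..t} f'" ..
  have pt: "norm (f' \<tau>) \<le> V0 * h \<tau>" if tau: "\<tau> \<in> {0..t}" for \<tau>
  proof -
    consider "\<tau> = 0" | "\<tau> = t" | "0 < \<tau> \<and> \<tau> < t" using tau by force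
    then show ?thesis
    proof cases
      case 1 then show ?thesis using V0 tau by (simp add: f'_def h_def)
    next
      case 2 then show ?thesis using t by (simp add: f'_def h_def f_def heat_kernel_def)
    next
      case 3
      then have sg: "t - \<tau> > 0" by simp
      have l: "\<bar>s t - s \<tau>\<bar> \<le> V0 * (t - \<tau>)" using lip[OF sc sd vb] 3 by blast
      have ab: "\<bar>x - s t\<bar> \<le> \<bar>x - s \<tau>\<bar> + V0 * (t - \<tau>)" using l by linarith
      have "\<bar>v \<tau>\<bar> \<le> V0" using vb 3 by blast
      have K: "exp (\<alpha> * \<bar>x - s t\<bar>) * \<bar>exp (- \<gamma> * (t - \<tau>)) * (exp (- ((x - s \<tau>)^2) / (4 * (t - \<tau>))) / sqrt (4 * pi * (t - \<tau>))) * v \<tau>\<bar>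
         \<le> V0 * (exp (- (\<gamma>/4) * (t - \<tau>)) / sqrt (4 * pi * (t - \<tau>)))"
        by (rule key_pt[OF sg assms(5) ab \<open>\<bar>v \<tau>\<bar> \<le> V0\<close> ac])
      have n1: "norm (f' \<tau>) = w * \<bar>f \<tau>\<bar>" using 3 by (simp add: f'_def abs_mult w_def)
      have n2: "f \<tau> = exp (- \<gamma> * (t - \<tau>)) * (exp (- ((x - s \<tau>)^2) / (4 * (t - \<tau>))) / sqrt (4 * pi * (t - \<tau>))) * v \<tau>"
        by (simp only: f_def heat_kernel_def)
      have n3: "h \<tau> = exp (- (\<gamma>/4) * (t - \<tau>)) / sqrt (4 * pi * (t - \<tau>))"
        by (simp only: h_def c_def)
      show ?thesis unfolding n1 n2 n3 w_def using K .
    qed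
  qed
  have "\<bar>integral {0..t} f'\<bar> \<le> V0 * J"
  proof (cases "f' integrable_on {0..t}")
    case True
    have "norm (integral {0..t} f') \<le> integral {0..t} (\<lambda>\<tau>. V0 * h \<tau>)"
      by (rule integral_norm_bound_integral[OF True integrable_on_mult_right[OF has_integral_integrable[OF hJ]] pt])
    also have "\<dots> = V0 * J" using integral_unique[OF has_integral_mult_right[OF hJ, of V0]] .
    finally show ?thesis by simp
  next
    case False
    have "0 \<le> J" by (rule has_integral_nonneg[OF hJ]) (simp add: h_def)
    then show ?thesis using not_integrable_integral[OF False] V0 by simp
  qed
  moreover have "\<bar>integral {0..t} f'\<bar> = w * \<bar>integral {0..t} f\<bar>"
    unfolding If[symmetric] abs_mult by (simp add: w_def)
  ultimately have "w * \<bar>integral {0..t} f\<bar> \<le> V0 / sqrt \<gamma>"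
    using J2 by linarith
  then show "exp (\<alpha> * \<bar>x - s t\<bar>) * \<bar>T1 \<gamma> s v t x\<bar> \<le> V0 / sqrt \<gamma>"
    unfolding T1_def w_def f_def by simp
qed

end
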